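(* Let $M$ be an endo-AIP right $R$-module and $S=\mathrm{End}_R(M)$. If $S$ is a local ring, then $S$ is a prime ring.
   Context: For $N\le M$, $l_S(N)=\{\phi\in S:\phi(N)=0\}$. An ideal $I$ of $S$ is right s-unital if for every $a\in I$ there is $x\in I$ with $ax=a$. $M$ is endo-AIP if $l_S(N)$ is a right s-unital ideal of $S$ for every fully invariant submodule $N$ of $M$. *)

theory Defs
  imports "HOL-Algebra.Algebra"
begin

text \<open>A right R-module: an abelian group M (additive part of a ring record) with a
  right scalar action act :: 'm => 'r => 'm, written act x r = x r.\<close>

definition right_module ::
  "('r, 'a) ring_scheme \<Rightarrow> ('m, 'b) ring_scheme \<Rightarrow> ('m \<Rightarrow> 'r \<Rightarrow> 'm) \<Rightarrow> bool" where
  "right_module R M act \<longleftrightarrow> ring R \<and> abelian_group M \<and>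
     (\<forall>x\<in>carrier M. \<forall>r\<in>carrier R. act x r \<in> carrier M) \<and>
     (\<forall>x\<in>carrier M. \<forall>y\<in>carrier M. \<forall>r\<in>carrier R.
        act (x \<oplus>\<^bsub>M\<^esub> y) r = act x r \<oplus>\<^bsub>M\<^esub> act y r) \<and>
     (\<forall>x\<in>carrier M. \<forall>r\<in>carrier R. \<forall>s\<in>carrier R.
        act x (r \<oplus>\<^bsub>R\<^esub> s) = act x r \<oplus>\<^bsub>M\<^esub> act x s) \<and>
     (\<forall>x\<in>carrier M. \<forall>r\<in>carrier R. \<forall>s\<in>carrier R.
        act x (r \<otimes>\<^bsub>R\<^esub> s) = act (act x r) s) \<and>
     (\<forall>x\<in>carrier M. act x \<one>\<^bsub>R\<^esub> = x)"

definition module_endos ::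
  "('r, 'a) ring_scheme \<Rightarrow> ('m, 'b) ring_scheme \<Rightarrow> ('m \<Rightarrow> 'r \<Rightarrow> 'm) \<Rightarrow> ('m \<Rightarrow> 'm) set" where
  "module_endos R M act = {f. f \<in> carrier M \<rightarrow> carrier M \<and> f \<in> extensional (carrier M) \<and>
     (\<forall>x\<in>carrier M. \<forall>y\<in>carrier M. f (x \<oplus>\<^bsub>M\<^esub> y) = f x \<oplus>\<^bsub>M\<^esub> f y) \<and>
     (\<forall>x\<in>carrier M. \<forall>r\<in>carrier R. f (act x r) = act (f x) r)}"

definition End_ring ::
  "('r, 'a) ring_scheme \<Rightarrow> ('m, 'b) ring_scheme \<Rightarrow> ('m \<Rightarrow> 'r \<Rightarrow> 'm) \<Rightarrow> ('m \<Rightarrow> 'm) ring" where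
  "End_ring R M act =
     \<lparr> carrier = module_endos R M act,
       Group.monoid.mult = (\<lambda>f g. \<lambda>x\<in>carrier M. f (g x)),
       Group.monoid.one = (\<lambda>x\<in>carrier M. x),
       Ring.ring.zero = (\<lambda>x\<in>carrier M. \<zero>\<^bsub>M\<^esub>),
       Ring.ring.add = (\<lambda>f g. \<lambda>x\<in>carrier M. f x \<oplus>\<^bsub>M\<^esub> g x) \<rparr>"

definition submodule ::
  "('r, 'a) ring_scheme \<Rightarrow> ('m, 'b) ring_scheme \<Rightarrow> ('m \<Rightarrow> 'r \<Rightarrow> 'm) \<Rightarrow> 'm set \<Rightarrow> bool" where
  "submodule R M act N \<longleftrightarrow> additive_subgroup N M \<and>
     (\<forall>x\<in>N. \<forall>r\<in>carrier R. act x r \<in> N)"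

definition fully_invariant ::
  "('r, 'a) ring_scheme \<Rightarrow> ('m, 'b) ring_scheme \<Rightarrow> ('m \<Rightarrow> 'r \<Rightarrow> 'm) \<Rightarrow> 'm set \<Rightarrow> bool" where
  "fully_invariant R M act N \<longleftrightarrow> submodule R M act N \<and>
     (\<forall>f\<in>module_endos R M act. f ` N \<subseteq> N)"

definition left_annihilator ::
  "('r, 'a) ring_scheme \<Rightarrow> ('m, 'b) ring_scheme \<Rightarrow> ('m \<Rightarrow> 'r \<Rightarrow> 'm) \<Rightarrow> 'm set \<Rightarrow> ('m \<Rightarrow> 'm) set" where
  "left_annihilator R M act N = {f \<in> module_endos R M act. \<forall>x\<in>N. f x = \<zero>\<^bsub>M\<^esub>}"

definition right_s_unital_ideal :: "'c set \<Rightarrow> ('c, 'd) ring_scheme \<Rightarrow> bool" where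
  "right_s_unital_ideal I S \<longleftrightarrow> ideal I S \<and> (\<forall>a\<in>I. \<exists>x\<in>I. a \<otimes>\<^bsub>S\<^esub> x = a)"

definition endo_AIP ::
  "('r, 'a) ring_scheme \<Rightarrow> ('m, 'b) ring_scheme \<Rightarrow> ('m \<Rightarrow> 'r \<Rightarrow> 'm) \<Rightarrow> bool" where
  "endo_AIP R M act \<longleftrightarrow> (\<forall>N. fully_invariant R M act N \<longrightarrow>
     right_s_unital_ideal (left_annihilator R M act N) (End_ring R M act))"

text \<open>A local ring: a ring whose non-units form an ideal (equivalently, a unique
  maximal one-sided ideal); this forces 1 \<noteq> 0.\<close>

definition local_ring :: "('c, 'd) ring_scheme \<Rightarrow> bool" where
  "local_ring S \<longleftrightarrow> ring S \<and> ideal (carrier S - Units S) S"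

definition prime_ring :: "('c, 'd) ring_scheme \<Rightarrow> bool" where
  "prime_ring S \<longleftrightarrow> ring S \<and> \<one>\<^bsub>S\<^esub> \<noteq> \<zero>\<^bsub>S\<^esub> \<and>
     (\<forall>a\<in>carrier S. \<forall>b\<in>carrier S.
        (\<forall>s\<in>carrier S. a \<otimes>\<^bsub>S\<^esub> s \<otimes>\<^bsub>S\<^esub> b = \<zero>\<^bsub>S\<^esub>) \<longrightarrow>
        a = \<zero>\<^bsub>S\<^esub> \<or> b = \<zero>\<^bsub>S\<^esub>)"

end

theory Submission
  imports Defs
begin

lemma endo_zero:
  assumes "abelian_group M" "f \<in> module_endos R M act"
  shows "f \<zero>\<^bsub>M\<^esub> = \<zero>\<^bsub>M\<^esub>"
proof -
  interpret abelian_group M by fact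
  have c: "f \<zero>\<^bsub>M\<^esub> \<in> carrier M" using assms(2) unfolding module_endos_def by auto
  have "f \<zero>\<^bsub>M\<^esub> = f \<zero>\<^bsub>M\<^esub> \<oplus>\<^bsub>M\<^esub> f \<zero>\<^bsub>M\<^esub>"
    using assms(2) unfolding module_endos_def by (metis (mono_tags, lifting) mem_Collect_eq l_zero zero_closed)
  then show ?thesis using c by (metis l_zero r_neg add.m_assoc a_inv_closed add.inv_closed r_zero add.r_cancel_one' zero_closed)
qed

lemma endo_neg:
  assumes "abelian_group M" "f \<in> module_endos R M act" "y \<in> carrier M"
  shows "f (\<ominus>\<^bsub>M\<^esub> y) = \<ominus>\<^bsub>M\<^esub> f y"
proof -
  interpret abelian_group M by fact
  have c: "\<And>z. z \<in> carrier M \<Longrightarrow> f z \<in> carrier M" using assms(2) unfolding module_endos_def by auto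
  have ad: "\<And>x z. x \<in> carrier M \<Longrightarrow> z \<in> carrier M \<Longrightarrow> f (x \<oplus>\<^bsub>M\<^esub> z) = f x \<oplus>\<^bsub>M\<^esub> f z"
    using assms(2) unfolding module_endos_def by auto
  have "f (\<ominus>\<^bsub>M\<^esub> y) \<oplus>\<^bsub>M\<^esub> f y = \<zero>\<^bsub>M\<^esub>"
    using ad[of "\<ominus>\<^bsub>M\<^esub> y" y] assms(3) endo_zero[OF assms(1,2)] by (simp add: l_neg)
  then show ?thesis using c assms(3) by (metis minus_equality a_inv_closed add.inv_closed)
qed

lemma act_zero:
  assumes "right_module R M act" "r \<in> carrier R"
  shows "act \<zero>\<^bsub>M\<^esub> r = \<zero>\<^bsub>M\<^esub>"
proof -
  interpret abelian_group M using assms(1) unfolding right_module_def by auto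
  have c: "act \<zero>\<^bsub>M\<^esub> r \<in> carrier M" using assms unfolding right_module_def by auto
  have "act \<zero>\<^bsub>M\<^esub> r = act \<zero>\<^bsub>M\<^esub> r \<oplus>\<^bsub>M\<^esub> act \<zero>\<^bsub>M\<^esub> r"
    using assms unfolding right_module_def by (metis l_zero zero_closed)
  then show ?thesis using c by (metis add.r_cancel_one' zero_closed)
qed

theorem proposition3p9:
  fixes R :: "('r, 'a) ring_scheme" and M :: "('m, 'b) ring_scheme"
    and act :: "'m \<Rightarrow> 'r \<Rightarrow> 'm"
  assumes "right_module R M act"
    and "endo_AIP R M act"
    and "local_ring (End_ring R M act)"
  shows "prime_ring (End_ring R M act)"
proof -
  define S where "S = End_ring R M act"
  have abM: "abelian_group M" using assms(1) unfolding right_module_def by auto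
  interpret M: abelian_group M by fact
  have rS: "ring S" using assms(3) unfolding local_ring_def S_def by auto
  interpret S: ring S by fact
  have idl: "ideal (carrier S - Units S) S" using assms(3) unfolding local_ring_def S_def by auto
  have cS: "carrier S = module_endos R M act" unfolding S_def End_ring_def by simp
  have mS: "\<And>f g. f \<otimes>\<^bsub>S\<^esub> g = (\<lambda>x\<in>carrier M. f (g x))" unfolding S_def End_ring_def by simp
  have oS: "\<one>\<^bsub>S\<^esub> = (\<lambda>x\<in>carrier M. x)" unfolding S_def End_ring_def by simp
  have zS: "\<zero>\<^bsub>S\<^esub> = (\<lambda>x\<in>carrier M. \<zero>\<^bsub>M\<^esub>)" unfolding S_def End_ring_def by simp
  have fc: "\<And>f y. f \<in> carrier S \<Longrightarrow> y \<in> carrier M \<Longrightarrow> f y \<in> carrier M"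
    unfolding cS module_endos_def by auto
  have fext: "\<And>f. f \<in> carrier S \<Longrightarrow> f \<in> extensional (carrier M)"
    unfolding cS module_endos_def by auto
  have fadd: "\<And>f x z. f \<in> carrier S \<Longrightarrow> x \<in> carrier M \<Longrightarrow> z \<in> carrier M \<Longrightarrow> f (x \<oplus>\<^bsub>M\<^esub> z) = f x \<oplus>\<^bsub>M\<^esub> f z"
    unfolding cS module_endos_def by auto
  have fact_: "\<And>f x r. f \<in> carrier S \<Longrightarrow> x \<in> carrier M \<Longrightarrow> r \<in> carrier R \<Longrightarrow> f (act x r) = act (f x) r"
    unfolding cS module_endos_def by auto
  have f0: "\<And>f. f \<in> carrier S \<Longrightarrow> f \<zero>\<^bsub>M\<^esub> = \<zero>\<^bsub>M\<^esub>" using endo_zero[OF abM] cS by blast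
  have fneg: "\<And>f y. f \<in> carrier S \<Longrightarrow> y \<in> carrier M \<Longrightarrow> f (\<ominus>\<^bsub>M\<^esub> y) = \<ominus>\<^bsub>M\<^esub> f y"
    using endo_neg[OF abM] cS by blast
  have actc: "\<And>x r. x \<in> carrier M \<Longrightarrow> r \<in> carrier R \<Longrightarrow> act x r \<in> carrier M"
    using assms(1) unfolding right_module_def by auto
  have iszero: "\<And>f. f \<in> carrier S \<Longrightarrow> (\<forall>y\<in>carrier M. f y = \<zero>\<^bsub>M\<^esub>) \<Longrightarrow> f = \<zero>\<^bsub>S\<^esub>"
  proof -
    fix f assume "f \<in> carrier S" "\<forall>y\<in>carrier M. f y = \<zero>\<^bsub>M\<^esub>"
    then show "f = \<zero>\<^bsub>S\<^esub>" using fext[of f] unfolding zS by (auto simp: extensional_def)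
  qed
  have one_ne: "\<one>\<^bsub>S\<^esub> \<noteq> \<zero>\<^bsub>S\<^esub>"
  proof
    assume h: "\<one>\<^bsub>S\<^esub> = \<zero>\<^bsub>S\<^esub>"
    have "\<zero>\<^bsub>S\<^esub> \<in> carrier S - Units S" using idl by (meson ideal.axioms(1) additive_subgroup.zero_closed)
    then show False using h S.Units_one_closed by simp
  qed
  have main: "a = \<zero>\<^bsub>S\<^esub> \<or> b = \<zero>\<^bsub>S\<^esub>"
    if a: "a \<in> carrier S" and b: "b \<in> carrier S" and h: "\<forall>s\<in>carrier S. a \<otimes>\<^bsub>S\<^esub> s \<otimes>\<^bsub>S\<^esub> b = \<zero>\<^bsub>S\<^esub>" for a b
  proof -
    define N where "N = {y \<in> carrier M. \<forall>s\<in>carrier S. a (s y) = \<zero>\<^bsub>M\<^esub>}"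
    have sub: "additive_subgroup N M"
    proof (rule additive_subgroupI, unfold_locales)
      show "N \<subseteq> carrier (add_monoid M)" unfolding N_def by auto
      show "\<one>\<^bsub>add_monoid M\<^esub> \<in> N" unfolding N_def using a by (auto simp: f0)
      fix x y assume x: "x \<in> N" and y: "y \<in> N"
      show "x \<otimes>\<^bsub>add_monoid M\<^esub> y \<in> N" using x y a fc unfolding N_def by (auto simp: fadd)
      have "\<ominus>\<^bsub>M\<^esub> x \<in> N" using x a fc unfolding N_def by (auto simp: fneg)
      then show "inv\<^bsub>add_monoid M\<^esub> x \<in> N" by (simp add: a_inv_def)
    qed
    have fi: "fully_invariant R M act N"
      unfolding fully_invariant_def submodule_def
    proof (intro conjI ballI)
      show "additive_subgroup N M" by fact
      fix x r assume x: "x \<in> N" and r: "r \<in> carrier R"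
      show "act x r \<in> N" using x r a fc unfolding N_def
        by (auto simp: actc fact_ act_zero[OF assms(1)])
    next
      fix f assume f: "f \<in> module_endos R M act"
      show "f ` N \<subseteq> N"
      proof
        fix z assume "z \<in> f ` N"
        then obtain y where y: "y \<in> N" "z = f y" by auto
        have "\<forall>s\<in>carrier S. a (s (f y)) = \<zero>\<^bsub>M\<^esub>"
        proof
          fix s assume s: "s \<in> carrier S"
          have "s \<otimes>\<^bsub>S\<^esub> f \<in> carrier S" using s f cS by auto
          then have "a ((s \<otimes>\<^bsub>S\<^esub> f) y) = \<zero>\<^bsub>M\<^esub>" using y unfolding N_def by auto
          then show "a (s (f y)) = \<zero>\<^bsub>M\<^esub>" using y unfolding N_def mS by auto
        qed
        then show "z \<in> N" using y f cS fc unfolding N_def by auto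
      qed
    qed
    have su: "right_s_unital_ideal (left_annihilator R M act N) S"
      using assms(2) fi unfolding endo_AIP_def S_def by auto
    have aI: "a \<in> left_annihilator R M act N"
      unfolding left_annihilator_def using a cS
    proof (auto)
      fix y assume "y \<in> N"
      then show "a y = \<zero>\<^bsub>M\<^esub>" unfolding N_def using S.one_closed oS by auto
    qed
    obtain x where x: "x \<in> left_annihilator R M act N" and ax: "a \<otimes>\<^bsub>S\<^esub> x = a"
      using su aI unfolding right_s_unital_ideal_def by blast
    have xc: "x \<in> carrier S" using x cS unfolding left_annihilator_def by auto
    have bN: "b y \<in> N" if y: "y \<in> carrier M" for y
    proof -
      have "\<forall>s\<in>carrier S. a (s (b y)) = \<zero>\<^bsub>M\<^esub>"
      proof
        fix s assume s: "s \<in> carrier S"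
        have "(a \<otimes>\<^bsub>S\<^esub> s \<otimes>\<^bsub>S\<^esub> b) y = \<zero>\<^bsub>M\<^esub>" using h s y unfolding zS by auto
        then show "a (s (b y)) = \<zero>\<^bsub>M\<^esub>" using y b fc unfolding mS by auto
      qed
      then show ?thesis using fc b y unfolding N_def by auto
    qed
    have xb: "x \<otimes>\<^bsub>S\<^esub> b = \<zero>\<^bsub>S\<^esub>"
    proof (rule iszero)
      show "x \<otimes>\<^bsub>S\<^esub> b \<in> carrier S" using xc b by auto
      show "\<forall>y\<in>carrier M. (x \<otimes>\<^bsub>S\<^esub> b) y = \<zero>\<^bsub>M\<^esub>"
        using x bN unfolding mS left_annihilator_def by auto
    qed
    show ?thesis
    proof (cases "x \<in> Units S")
      case True
      then have "b = inv\<^bsub>S\<^esub> x \<otimes>\<^bsub>S\<^esub> (x \<otimes>\<^bsub>S\<^esub> b)"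
        using b xc by (simp add: S.m_assoc[symmetric] S.Units_l_inv)
      then show ?thesis using xb True by simp
    next
      case False
      then have xI: "x \<in> carrier S - Units S" using xc by auto
      have "\<one>\<^bsub>S\<^esub> \<ominus>\<^bsub>S\<^esub> x \<in> Units S"
      proof (rule ccontr)
        assume "\<one>\<^bsub>S\<^esub> \<ominus>\<^bsub>S\<^esub> x \<notin> Units S"
        then have "\<one>\<^bsub>S\<^esub> \<ominus>\<^bsub>S\<^esub> x \<in> carrier S - Units S" using xc by auto
        then have "x \<oplus>\<^bsub>S\<^esub> (\<one>\<^bsub>S\<^esub> \<ominus>\<^bsub>S\<^esub> x) \<in> carrier S - Units S"
          using xI idl by (meson ideal.axioms(1) additive_subgroup.a_closed)
        moreover have "x \<oplus>\<^bsub>S\<^esub> (\<one>\<^bsub>S\<^esub> \<ominus>\<^bsub>S\<^esub> x) = \<one>\<^bsub>S\<^esub>" using xc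
          by (metis S.add.inv_closed S.add.m_lcomm S.minus_eq S.one_closed S.r_neg S.r_zero)
        ultimately show False by simp
      qed
      moreover have "a \<otimes>\<^bsub>S\<^esub> (\<one>\<^bsub>S\<^esub> \<ominus>\<^bsub>S\<^esub> x) = \<zero>\<^bsub>S\<^esub>"
        using a xc ax by (simp add: S.r_distr S.minus_eq S.r_minus S.r_neg)
      ultimately have "a = \<zero>\<^bsub>S\<^esub>"
        using a by (metis S.Units_closed S.Units_inv_closed S.Units_r_inv S.m_assoc S.l_null S.r_one)
      then show ?thesis by simp
    qed
  qed
  show ?thesis unfolding prime_ring_def S_def[symmetric] using rS one_ne main by blast
qed

end
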